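(* In every symmetric instance with $k$ signals ($2\le k\le n$), for every direct and persuasive scheme $\varphi$ that recommends only actions in $[k]$, there exist $s\in[-\infty,0]$ and an $s$-Pareto point collection $\mathcal P$ with $u_{\mathcal S}(\mathcal P)\ge u_{\mathcal S}(\varphi)$.
   Context: Model: a receiver chooses one of the actions $[n]$; each action $i$ has a type $\theta_i$; the state $\boldsymbol\theta=(\theta_1,\dots,\theta_n)$ is drawn from a commonly known distribution $q$ over a finite set of type vectors. Each type $t$ has receiver value $\rho(t)$ and sender value $\xi(t)$. A signaling scheme with $k$ signals maps each state to a distribution over $k$ signals; the receiver picks an action maximizing her conditional expected utility given the signal, ties broken in favor of the sender; $u_{\mathcal S},u_{\mathcal R}$ denote expected utilities. Direct: each signal recommends an action; persuasive: for each signal sent with positive probability recommending $i$, $\mathbb E[\rho(\theta_i)\mid\sigma]\ge\mathbb E[\rho(\theta_j)\mid\sigma]$ for all $j$. $\rho_E=\max_{i}\sum_{\boldsymbol\theta}q_{\boldsymbol\theta}\rho(\theta_i)$. Symmetric instance: $q_{\boldsymbol\theta}=q_{\boldsymbol\theta'}$ whenever $\boldsymbol\theta'$ is a permutation of $\boldsymbol\theta$; types in a state are pairwise distinct. Identify each type $c$ with the point $(\rho(c),\xi(c))$. For a $k$-set $C$ of types, $q_C=\Pr[\{\theta_1,\dots,\theta_k\}=C]$. For $s\in(-\infty,0]$, a point $p\in\mathrm{conv}(C)$ corresponds to slope $s$ if it maximizes $y-sx$ over $(x,y)\in\mathrm{conv}(C)$; it corresponds to slope $-\infty$ if it maximizes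 the first coordinate over $\mathrm{conv}(C)$. A point collection $\mathcal P$ assigns to each $C$ with $q_C>0$ a point $p(C)=(p_{\mathcal R}(C),p_{\mathcal S}(C))\in\mathrm{conv}(C)$; $u_{\mathcal S}(\mathcal P)=\sum_Cq_Cp_{\mathcal S}(C)$, $u_{\mathcal R}(\mathcal P)=\sum_Cq_Cp_{\mathcal R}(C)$. $\mathcal P$ is $s$-Pareto if every $p(C)$ corresponds to slope $s$ and $u_{\mathcal R}(\mathcal P)\ge\rho_E$. *)

theory Defs
  imports "HOL-Analysis.Analysis" "HOL-Probability.Probability_Mass_Function"
begin

(* Conventions: actions are 0-based indices i < n (so [n] = {0..<n}, [k] = {0..<k});
   a state is a list theta of length n, theta ! i is the type of action i;
   the prior is a pmf q over states with finite support;
   signals are 0-based indices sigma < k; a scheme phi gives phi theta sigma = Pr[sigma | theta];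
   a direct scheme additionally has rec sigma = the action recommended by signal sigma. *)

definition symmetric_instance :: "'t list pmf \<Rightarrow> nat \<Rightarrow> bool" where
  "symmetric_instance q n \<longleftrightarrow>
     finite (set_pmf q) \<and>
     (\<forall>\<theta>\<in>set_pmf q. length \<theta> = n \<and> distinct \<theta>) \<and>
     (\<forall>\<theta> \<theta>'. mset \<theta>' = mset \<theta> \<longrightarrow> pmf q \<theta> = pmf q \<theta>')"

definition is_scheme :: "'t list pmf \<Rightarrow> nat \<Rightarrow> ('t list \<Rightarrow> nat \<Rightarrow> real) \<Rightarrow> bool" where
  "is_scheme q k \<phi> \<longleftrightarrow>
     (\<forall>\<theta>\<in>set_pmf q. (\<forall>\<sigma><k. 0 \<le> \<phi> \<theta> \<sigma>) \<and> (\<Sum>\<sigma><k. \<phi> \<theta> \<sigma>) = 1)"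

definition sig_prob :: "'t list pmf \<Rightarrow> ('t list \<Rightarrow> nat \<Rightarrow> real) \<Rightarrow> nat \<Rightarrow> real" where
  "sig_prob q \<phi> \<sigma> = (\<Sum>\<theta>\<in>set_pmf q. pmf q \<theta> * \<phi> \<theta> \<sigma>)"

definition cond_exp ::
  "'t list pmf \<Rightarrow> ('t list \<Rightarrow> nat \<Rightarrow> real) \<Rightarrow> ('t \<Rightarrow> real) \<Rightarrow> nat \<Rightarrow> nat \<Rightarrow> real" where
  "cond_exp q \<phi> f \<sigma> i =
     (\<Sum>\<theta>\<in>set_pmf q. pmf q \<theta> * \<phi> \<theta> \<sigma> * f (\<theta> ! i)) / sig_prob q \<phi> \<sigma>"

definition best_actions ::
  "'t list pmf \<Rightarrow> nat \<Rightarrow> ('t list \<Rightarrow> nat \<Rightarrow> real) \<Rightarrow> ('t \<Rightarrow> real) \<Rightarrow> nat \<Rightarrow> nat set" where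
  "best_actions q n \<phi> \<rho> \<sigma> =
     {i. i < n \<and> (\<forall>j<n. cond_exp q \<phi> \<rho> \<sigma> j \<le> cond_exp q \<phi> \<rho> \<sigma> i)}"

text \<open>Sender's expected utility: receiver best-responds, ties broken in favour of the sender.\<close>
definition sender_utility ::
  "'t list pmf \<Rightarrow> nat \<Rightarrow> nat \<Rightarrow> ('t list \<Rightarrow> nat \<Rightarrow> real) \<Rightarrow> ('t \<Rightarrow> real) \<Rightarrow> ('t \<Rightarrow> real) \<Rightarrow> real" where
  "sender_utility q n k \<phi> \<rho> \<xi> =
     (\<Sum>\<sigma>\<in>{\<sigma>. \<sigma> < k \<and> 0 < sig_prob q \<phi> \<sigma>}.
        sig_prob q \<phi> \<sigma> * Max ((\<lambda>i. cond_exp q \<phi> \<xi> \<sigma> i) ` best_actions q n \<phi> \<rho> \<sigma>))"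

definition direct_persuasive ::
  "'t list pmf \<Rightarrow> nat \<Rightarrow> nat \<Rightarrow> ('t list \<Rightarrow> nat \<Rightarrow> real) \<Rightarrow> (nat \<Rightarrow> nat) \<Rightarrow> ('t \<Rightarrow> real) \<Rightarrow> bool" where
  "direct_persuasive q n k \<phi> rec \<rho> \<longleftrightarrow>
     (\<forall>\<sigma><k. rec \<sigma> < n) \<and>
     (\<forall>\<sigma><k. 0 < sig_prob q \<phi> \<sigma> \<longrightarrow>
        (\<forall>j<n. cond_exp q \<phi> \<rho> \<sigma> j \<le> cond_exp q \<phi> \<rho> \<sigma> (rec \<sigma>)))"

definition rho_E :: "'t list pmf \<Rightarrow> nat \<Rightarrow> ('t \<Rightarrow> real) \<Rightarrow> real" where
  "rho_E q n \<rho> = Max ((\<lambda>i. \<Sum>\<theta>\<in>set_pmf q. pmf q \<theta> * \<rho> (\<theta> ! i)) ` {..<n})"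

definition qC :: "'t list pmf \<Rightarrow> nat \<Rightarrow> 't set \<Rightarrow> real" where
  "qC q k C = (\<Sum>\<theta>\<in>set_pmf q. if set (take k \<theta>) = C then pmf q \<theta> else 0)"

definition supp_sets :: "'t list pmf \<Rightarrow> nat \<Rightarrow> 't set set" where
  "supp_sets q k = {C. 0 < qC q k C}"

definition type_pt :: "('t \<Rightarrow> real) \<Rightarrow> ('t \<Rightarrow> real) \<Rightarrow> 't \<Rightarrow> real \<times> real" where
  "type_pt \<rho> \<xi> c = (\<rho> c, \<xi> c)"

definition conv_types :: "('t \<Rightarrow> real) \<Rightarrow> ('t \<Rightarrow> real) \<Rightarrow> 't set \<Rightarrow> (real \<times> real) set" where
  "conv_types \<rho> \<xi> C = convex hull (type_pt \<rho> \<xi> ` C)"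

definition corresponds_to_slope ::
  "('t \<Rightarrow> real) \<Rightarrow> ('t \<Rightarrow> real) \<Rightarrow> 't set \<Rightarrow> ereal \<Rightarrow> real \<times> real \<Rightarrow> bool" where
  "corresponds_to_slope \<rho> \<xi> C s p \<longleftrightarrow>
     p \<in> conv_types \<rho> \<xi> C \<and>
     (if s = -\<infinity> then (\<forall>z\<in>conv_types \<rho> \<xi> C. fst z \<le> fst p)
      else (\<forall>z\<in>conv_types \<rho> \<xi> C.
              snd z - real_of_ereal s * fst z \<le> snd p - real_of_ereal s * fst p))"

definition point_collection ::
  "'t list pmf \<Rightarrow> nat \<Rightarrow> ('t \<Rightarrow> real) \<Rightarrow> ('t \<Rightarrow> real) \<Rightarrow> ('t set \<Rightarrow> real \<times> real) \<Rightarrow> bool" where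
  "point_collection q k \<rho> \<xi> P \<longleftrightarrow> (\<forall>C\<in>supp_sets q k. P C \<in> conv_types \<rho> \<xi> C)"

definition uS_pc :: "'t list pmf \<Rightarrow> nat \<Rightarrow> ('t set \<Rightarrow> real \<times> real) \<Rightarrow> real" where
  "uS_pc q k P = (\<Sum>C\<in>supp_sets q k. qC q k C * snd (P C))"

definition uR_pc :: "'t list pmf \<Rightarrow> nat \<Rightarrow> ('t set \<Rightarrow> real \<times> real) \<Rightarrow> real" where
  "uR_pc q k P = (\<Sum>C\<in>supp_sets q k. qC q k C * fst (P C))"

definition s_pareto ::
  "'t list pmf \<Rightarrow> nat \<Rightarrow> nat \<Rightarrow> ('t \<Rightarrow> real) \<Rightarrow> ('t \<Rightarrow> real) \<Rightarrow> ereal \<Rightarrow> ('t set \<Rightarrow> real \<times> real) \<Rightarrow> bool" where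
  "s_pareto q n k \<rho> \<xi> s P \<longleftrightarrow>
     point_collection q k \<rho> \<xi> P \<and>
     (\<forall>C\<in>supp_sets q k. corresponds_to_slope \<rho> \<xi> C s (P C)) \<and>
     rho_E q n \<rho> \<le> uR_pc q k P"

end

theory Submission
  imports Defs "HOL-Combinatorics.Permutations"
begin


lemma count_image_mset_set: "finite A \<Longrightarrow> count (image_mset f (mset_set A)) y = card {x\<in>A. f x = y}"
  by (simp add: count_image_mset' Collect_conj_eq) (metis (mono_tags, lifting) Collect_cong)

lemma exists_perm_into:
  fixes A :: "nat set"
  assumes "A \<subseteq> {..<n}" "card A \<le> k" "k \<le> n"
  obtains p where "p permutes {..<n}" "\<forall>x\<in>A. p x < k"
proof -
  obtain B where B: "A \<subseteq> B" "B \<subseteq> {..<n}" "card B = k"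
    using exists_subset_between[of A k "{..<n}"] assms by auto
  have fB: "finite B" using B finite_subset by blast
  have "image_mset (\<lambda>x. x \<in> B) (mset_set {..<n}) = image_mset (\<lambda>x. x < k) (mset_set {..<n})"
  proof (rule multiset_eqI)
    fix y :: bool
    show "count (image_mset (\<lambda>x. x \<in> B) (mset_set {..<n})) y = count (image_mset (\<lambda>x. x < k) (mset_set {..<n})) y"
    proof (cases y)
      case True
      have "{x\<in>{..<n}. (x \<in> B) = y} = B" "{x\<in>{..<n}. (x < k) = y} = {..<k}" using True B assms by auto
      then show ?thesis using B by (simp add: count_image_mset_set)
    next
      case False
      have "{x\<in>{..<n}. (x \<in> B) = y} = {..<n} - B" "{x\<in>{..<n}. (x < k) = y} = {..<n} - {..<k}" using False B assms by auto
      then show ?thesis using B fB assms by (simp add: count_image_mset_set card_Diff_subset)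
    qed
  qed
  then obtain p where "p permutes {..<n}" "\<forall>x\<in>{..<n}. (x \<in> B) = (p x < k)"
    using image_mset_eq_implies_permutes[of "{..<n}"] by blast
  then show ?thesis using that B assms by blast
qed


definition SS :: "'c set \<Rightarrow> ('c \<Rightarrow> real) \<Rightarrow> ('c \<Rightarrow> (real\<times>real) set) \<Rightarrow> (real\<times>real) set" where
  "SS F W K = {(\<Sum>C\<in>F. W C *\<^sub>R P C) | P. \<forall>C\<in>F. P C \<in> K C}"

lemma SS_insert:
  assumes "C \<notin> F" "finite F"
  shows "SS (insert C F) W K = (\<lambda>(u,v). W C *\<^sub>R u + v) ` (K C \<times> SS F W K)"
proof
  show "SS (insert C F) W K \<subseteq> (\<lambda>(u,v). W C *\<^sub>R u + v) ` (K C \<times> SS F W K)"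
  proof
    fix z assume "z \<in> SS (insert C F) W K"
    then obtain P where P: "\<forall>C'\<in>insert C F. P C' \<in> K C'" "z = (\<Sum>C'\<in>insert C F. W C' *\<^sub>R P C')"
      unfolding SS_def by blast
    have "z = W C *\<^sub>R P C + (\<Sum>C'\<in>F. W C' *\<^sub>R P C')" using P assms by simp
    moreover have "(\<Sum>C'\<in>F. W C' *\<^sub>R P C') \<in> SS F W K" using P unfolding SS_def by blast
    ultimately show "z \<in> (\<lambda>(u,v). W C *\<^sub>R u + v) ` (K C \<times> SS F W K)" using P
      by (intro image_eqI[where x="(P C, \<Sum>C'\<in>F. W C' *\<^sub>R P C')"]) auto
  qed
next
  show "(\<lambda>(u,v). W C *\<^sub>R u + v) ` (K C \<times> SS F W K) \<subseteq> SS (insert C F) W K"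
  proof
    fix z assume "z \<in> (\<lambda>(u,v). W C *\<^sub>R u + v) ` (K C \<times> SS F W K)"
    then obtain u v where u: "u \<in> K C" and v: "v \<in> SS F W K" and zuv: "z = W C *\<^sub>R u + v"
      by auto
    from v obtain P where P: "\<forall>C'\<in>F. P C' \<in> K C'" and vP: "v = (\<Sum>C'\<in>F. W C' *\<^sub>R P C')"
      unfolding SS_def by blast
    have z: "z = W C *\<^sub>R u + (\<Sum>C'\<in>F. W C' *\<^sub>R P C')" using zuv vP by simp
    define P' where "P' = P(C := u)"
    have "(\<Sum>C'\<in>F. W C' *\<^sub>R P' C') = (\<Sum>C'\<in>F. W C' *\<^sub>R P C')"
      using assms by (intro sum.cong) (auto simp: P'_def)
    then have "z = (\<Sum>C'\<in>insert C F. W C' *\<^sub>R P' C')" using z assms by (simp add: P'_def)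
    moreover have "\<forall>C'\<in>insert C F. P' C' \<in> K C'" using u P by (auto simp: P'_def)
    ultimately show "z \<in> SS (insert C F) W K" unfolding SS_def by blast
  qed
qed

lemma SS_compact:
  assumes "finite F" "\<forall>C\<in>F. compact (K C)"
  shows "compact (SS F W K)"
  using assms
proof (induction F rule: finite_induct)
  case empty
  then show ?case by (simp add: SS_def)
next
  case (insert C F)
  have "compact (K C \<times> SS F W K)" using insert by (intro compact_Times) auto
  then have "compact ((\<lambda>(u,v). W C *\<^sub>R u + v) ` (K C \<times> SS F W K))"
    by (intro compact_continuous_image) (auto intro!: continuous_intros simp: case_prod_unfold)
  then show ?case using SS_insert[OF insert(2,1)] by simp
qed

lemma SS_convex:
  assumes "\<forall>C\<in>F. convex (K C)"
  shows "convex (SS F W K)"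
  unfolding convex_def
proof (intro ballI allI impI)
  fix x y :: "real\<times>real" and u v :: real
  assume x: "x \<in> SS F W K" and y: "y \<in> SS F W K" and uv: "0 \<le> u" "0 \<le> v" "u + v = 1"
  obtain P1 where P1: "\<forall>C\<in>F. P1 C \<in> K C" "x = (\<Sum>C\<in>F. W C *\<^sub>R P1 C)" using x unfolding SS_def by blast
  obtain P2 where P2: "\<forall>C\<in>F. P2 C \<in> K C" "y = (\<Sum>C\<in>F. W C *\<^sub>R P2 C)" using y unfolding SS_def by blast
  define P where "P = (\<lambda>C. u *\<^sub>R P1 C + v *\<^sub>R P2 C)"
  have "\<forall>C\<in>F. P C \<in> K C"
  proof
    fix C assume "C \<in> F"
    then have "convex (K C)" "P1 C \<in> K C" "P2 C \<in> K C" using P1 P2 assms by auto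
    then show "P C \<in> K C" unfolding P_def using uv by (simp add: convexD)
  qed
  moreover have "u *\<^sub>R x + v *\<^sub>R y = (\<Sum>C\<in>F. W C *\<^sub>R P C)"
    unfolding P1(2) P2(2) P_def scaleR_sum_right sum.distrib[symmetric]
    by (intro sum.cong) (auto simp: algebra_simps)
  ultimately show "u *\<^sub>R x + v *\<^sub>R y \<in> SS F W K" unfolding SS_def by blast
qed

lemma opt_exists:
  fixes W :: "'c \<Rightarrow> real" and K :: "'c \<Rightarrow> (real\<times>real) set" and r :: real
  assumes fin: "finite F" and Wpos: "\<forall>C\<in>F. 0 < W C"
    and Kc: "\<forall>C\<in>F. compact (K C)" and Kv: "\<forall>C\<in>F. convex (K C)"
    and P0: "\<forall>C\<in>F. P0 C \<in> K C" and r: "r \<le> fst (\<Sum>C\<in>F. W C *\<^sub>R P0 C)"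
  shows "\<exists>P a1 a2. (\<forall>C\<in>F. P C \<in> K C) \<and> r \<le> fst (\<Sum>C\<in>F. W C *\<^sub>R P C) \<and>
     snd (\<Sum>C\<in>F. W C *\<^sub>R P0 C) \<le> snd (\<Sum>C\<in>F. W C *\<^sub>R P C) \<and>
     0 \<le> a1 \<and> 0 \<le> a2 \<and> (a1 \<noteq> 0 \<or> a2 \<noteq> 0) \<and>
     (\<forall>C\<in>F. \<forall>w\<in>K C. a1 * fst w + a2 * snd w \<le> a1 * fst (P C) + a2 * snd (P C))"
proof -
  define S where "S = SS F W K"
  define Fe where "Fe = S \<inter> {z. r \<le> fst z}"
  define Z0 where "Z0 = (\<Sum>C\<in>F. W C *\<^sub>R P0 C)"
  have Z0S: "Z0 \<in> S" unfolding S_def SS_def Z0_def using P0 by blast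
  have "closed {z::real\<times>real. r \<le> fst z}" by (intro closed_Collect_le continuous_intros)
  then have cFe: "compact Fe" unfolding Fe_def S_def using SS_compact[OF fin Kc] by (intro compact_Int_closed) auto
  have Z0Fe: "Z0 \<in> Fe" using Z0S r unfolding Fe_def Z0_def by auto
  obtain zs where zs: "zs \<in> Fe" and zmax: "\<forall>y\<in>Fe. snd y \<le> snd zs"
  proof -
    have "continuous_on Fe snd" by (intro continuous_intros)
    moreover have "Fe \<noteq> {}" using Z0Fe by auto
    ultimately show ?thesis using continuous_attains_sup[OF cFe, of snd] that by blast
  qed
  have zsS: "zs \<in> S" and zsr: "r \<le> fst zs" using zs unfolding Fe_def by auto
  then obtain P where P: "\<forall>C\<in>F. P C \<in> K C" and zsP: "zs = (\<Sum>C\<in>F. W C *\<^sub>R P C)"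
    unfolding S_def SS_def by blast
  define T where "T = {z::real\<times>real. r \<le> fst z \<and> snd zs < snd z}"
  have Teq: "T = {z. inner (1::real,0::real) z \<ge> r} \<inter> {z. inner (0::real,1::real) z > snd zs}"
    unfolding T_def by (auto simp: inner_prod_def)
  have cT: "convex T" unfolding Teq by (intro convex_Int convex_halfspace_ge convex_halfspace_gt)
  have cS: "convex S" unfolding S_def by (rule SS_convex[OF Kv])
  have TS: "S \<inter> T = {}" using zmax unfolding T_def Fe_def by (auto simp: not_less[symmetric])
  have Tne: "(fst zs, snd zs + 1) \<in> T" unfolding T_def using zsr by simp
  obtain a b where ab: "a \<noteq> 0" "\<forall>x\<in>S. inner a x \<le> b" "\<forall>x\<in>T. inner a x \<ge> b"
    using separating_hyperplane_sets[OF cS cT] zsS Tne TS by blast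
  define a1 where "a1 = fst a"
  define a2 where "a2 = snd a"
  have inn: "inner a z = a1 * fst z + a2 * snd z" for z
    by (simp add: inner_prod_def a1_def a2_def)
  have Tb: "b \<le> a1 * x + a2 * y" if "r \<le> x" "snd zs < y" for x y
    using ab(3) that unfolding T_def inn by auto
  have a1: "0 \<le> a1"
  proof (rule ccontr)
    assume "\<not> 0 \<le> a1"
    then have neg: "a1 < 0" by simp
    define D where "D = a1 * fst zs + a2 * (snd zs + 1) - b + 1"
    define d where "d = max 0 (D / (- a1))"
    have dd: "D / (- a1) \<le> d" unfolding d_def by simp
    have "D = (D / (- a1)) * (- a1)" using neg by simp
    also have "\<dots> \<le> d * (- a1)" using dd neg by (intro mult_right_mono) auto
    finally have "D \<le> d * (- a1)" .
    moreover have "b \<le> a1 * (fst zs + d) + a2 * (snd zs + 1)"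
      using zsr by (intro Tb) (auto simp: d_def)
    ultimately show False unfolding D_def by (simp add: algebra_simps)
  qed
  have a2: "0 \<le> a2"
  proof (rule ccontr)
    assume "\<not> 0 \<le> a2"
    then have neg: "a2 < 0" by simp
    define D where "D = a1 * fst zs + a2 * (snd zs + 1) - b + 1"
    define d where "d = max 0 (D / (- a2))"
    have dd: "D / (- a2) \<le> d" unfolding d_def by simp
    have "D = (D / (- a2)) * (- a2)" using neg by simp
    also have "\<dots> \<le> d * (- a2)" using dd neg by (intro mult_right_mono) auto
    finally have "D \<le> d * (- a2)" .
    moreover have "b \<le> a1 * fst zs + a2 * (snd zs + 1 + d)"
      using zsr by (intro Tb) (auto simp: d_def)
    ultimately show False unfolding D_def by (simp add: algebra_simps)
  qed
  have bz: "b \<le> inner a zs"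
  proof (rule ccontr)
    assume "\<not> b \<le> inner a zs"
    then have lt: "a1 * fst zs + a2 * snd zs < b" unfolding inn by simp
    show False
    proof (cases "a2 = 0")
      case True
      then show False using Tb[of "fst zs" "snd zs + 1"] zsr lt by simp
    next
      case False
      then have pos: "0 < a2" using a2 by simp
      define e where "e = (b - (a1 * fst zs + a2 * snd zs)) / (2 * a2)"
      have epos: "0 < e" unfolding e_def using lt pos by simp
      have "a2 * e = (b - (a1 * fst zs + a2 * snd zs)) / 2" unfolding e_def using pos by simp
      moreover have "b \<le> a1 * fst zs + a2 * (snd zs + e)" using zsr epos by (intro Tb) auto
      ultimately show False using lt by (simp add: algebra_simps)
    qed
  qed
  have Smax: "inner a y \<le> inner a zs" if "y \<in> S" for y using ab(2) that bz by force
  have percomp: "a1 * fst w + a2 * snd w \<le> a1 * fst (P C) + a2 * snd (P C)" if C: "C \<in> F" and w: "w \<in> K C" for C w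
  proof -
    define P' where "P' = P(C := w)"
    have e0: "(\<Sum>C'\<in>F. W C' *\<^sub>R P' C') = W C *\<^sub>R P' C + (\<Sum>C'\<in>F - {C}. W C' *\<^sub>R P' C')"
      by (rule sum.remove[OF fin C])
    have "P' C = w" by (simp add: P'_def)
    then have "(\<Sum>C'\<in>F. W C' *\<^sub>R P' C') = W C *\<^sub>R w + (\<Sum>C'\<in>F - {C}. W C' *\<^sub>R P' C')"
      using e0 by simp
    also have "(\<Sum>C'\<in>F - {C}. W C' *\<^sub>R P' C') = (\<Sum>C'\<in>F - {C}. W C' *\<^sub>R P C')"
      by (intro sum.cong) (auto simp: P'_def)
    finally have e1: "(\<Sum>C'\<in>F. W C' *\<^sub>R P' C') = W C *\<^sub>R w + (\<Sum>C'\<in>F - {C}. W C' *\<^sub>R P C')" .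
    have e2: "zs = W C *\<^sub>R P C + (\<Sum>C'\<in>F - {C}. W C' *\<^sub>R P C')"
      unfolding zsP by (rule sum.remove[OF fin C])
    have "(\<Sum>C'\<in>F. W C' *\<^sub>R P' C') \<in> S" unfolding S_def SS_def using P w by (auto simp: P'_def)
    then have "inner a (W C *\<^sub>R w + (\<Sum>C'\<in>F - {C}. W C' *\<^sub>R P C')) \<le> inner a zs"
      using Smax e1 by simp
    then have "inner a (W C *\<^sub>R w) \<le> inner a (W C *\<^sub>R P C)"
      unfolding e2 inner_add_right by simp
    then have "W C * inner a w \<le> W C * inner a (P C)" by simp
    then have "inner a w \<le> inner a (P C)" using Wpos C by simp
    then show ?thesis unfolding inn .
  qed
  have "a1 \<noteq> 0 \<or> a2 \<noteq> 0" using ab(1) unfolding a1_def a2_def by (auto simp: prod_eq_iff)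
  moreover have "snd Z0 \<le> snd zs" using zmax Z0Fe by blast
  ultimately show ?thesis using P zsr zsP a1 a2 percomp unfolding Z0_def by blast
qed



theorem lemma3p2:
  fixes q :: "'t list pmf" and n k :: nat and \<rho> \<xi> :: "'t \<Rightarrow> real"
    and \<phi> :: "'t list \<Rightarrow> nat \<Rightarrow> real" and rec :: "nat \<Rightarrow> nat"
  assumes "symmetric_instance q n"
    and "2 \<le> k" and "k \<le> n"
    and "is_scheme q k \<phi>"
    and "direct_persuasive q n k \<phi> rec \<rho>"
    and "\<forall>\<sigma><k. rec \<sigma> < k"
  shows "\<exists>s::ereal. s \<le> 0 \<and> (\<exists>P. s_pareto q n k \<rho> \<xi> s P \<and>
           sender_utility q n k \<phi> \<rho> \<xi> \<le> uS_pc q k P)"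
proof -
  note sym = assms(1)[unfolded symmetric_instance_def]
  define supp where "supp = set_pmf q"
  have fin: "finite supp" using sym supp_def by auto
  have len: "\<And>\<theta>. \<theta> \<in> supp \<Longrightarrow> length \<theta> = n" using sym supp_def by auto
  have ppos: "\<And>\<theta>. \<theta> \<in> supp \<Longrightarrow> 0 < pmf q \<theta>"
    unfolding supp_def using set_pmf_iff pmf_nonneg by (metis less_eq_real_def)
  have symp: "\<And>\<theta> \<theta>'. mset \<theta>' = mset \<theta> \<Longrightarrow> pmf q \<theta> = pmf q \<theta>'" using sym by blast
  have phinn: "\<And>\<theta> \<sigma>. \<theta> \<in> supp \<Longrightarrow> \<sigma> < k \<Longrightarrow> 0 \<le> \<phi> \<theta> \<sigma>"
    using assms(4) unfolding is_scheme_def supp_def by blast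
  have phi1: "\<And>\<theta>. \<theta> \<in> supp \<Longrightarrow> (\<Sum>\<sigma><k. \<phi> \<theta> \<sigma>) = 1"
    using assms(4) unfolding is_scheme_def supp_def by blast
  define sp where "sp = sig_prob q \<phi>"
  define numer where "numer = (\<lambda>(f::'t \<Rightarrow> real) \<sigma> i. \<Sum>\<theta>\<in>supp. pmf q \<theta> * \<phi> \<theta> \<sigma> * f (\<theta> ! i))"
  have ce: "cond_exp q \<phi> f \<sigma> i = numer f \<sigma> i / sp \<sigma>" for f \<sigma> i
    unfolding cond_exp_def numer_def sp_def supp_def by simp
  have spdef: "sp \<sigma> = (\<Sum>\<theta>\<in>supp. pmf q \<theta> * \<phi> \<theta> \<sigma>)" for \<sigma>
    unfolding sp_def sig_prob_def supp_def by simp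
  have spnn: "0 \<le> sp \<sigma>" if "\<sigma> < k" for \<sigma>
    unfolding spdef using phinn that pmf_nonneg by (auto intro!: sum_nonneg)
  have sp0: "\<phi> \<theta> \<sigma> = 0" if "\<sigma> < k" "sp \<sigma> = 0" "\<theta> \<in> supp" for \<sigma> \<theta>
  proof -
    have "\<forall>\<theta>\<in>supp. pmf q \<theta> * \<phi> \<theta> \<sigma> = 0"
      using that(2) unfolding spdef
      by (subst sum_nonneg_eq_0_iff[OF fin, symmetric]) (auto intro!: mult_nonneg_nonneg phinn that(1))
    then show ?thesis using that(3) ppos by fastforce
  qed
  have num0: "numer f \<sigma> i = 0" if "\<sigma> < k" "sp \<sigma> = 0" for f \<sigma> i
    unfolding numer_def using sp0[OF that] by simp
  have numpos: "numer f \<sigma> i = sp \<sigma> * cond_exp q \<phi> f \<sigma> i" if "0 < sp \<sigma>" for f \<sigma> i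
    unfolding ce using that by simp
  define best where "best = best_actions q n \<phi> \<rho>"
  have recbest: "rec \<sigma> \<in> best \<sigma>" if "\<sigma> < k" "0 < sp \<sigma>" for \<sigma>
    using assms(5) that unfolding direct_persuasive_def best_def best_actions_def sp_def by auto
  have finbest: "finite (best \<sigma>)" for \<sigma>
    unfolding best_def best_actions_def by auto
  define M where "M = (\<lambda>\<sigma>. Max ((\<lambda>i. cond_exp q \<phi> \<xi> \<sigma> i) ` best \<sigma>))"
  have exa: "\<exists>i. i \<in> best \<sigma> \<and> cond_exp q \<phi> \<xi> \<sigma> i = M \<sigma>" if "\<sigma> < k" "0 < sp \<sigma>" for \<sigma>
  proof -
    have "M \<sigma> \<in> (\<lambda>i. cond_exp q \<phi> \<xi> \<sigma> i) ` best \<sigma>"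
      unfolding M_def using finbest recbest[OF that] by (intro Max_in) auto
    then show ?thesis by auto
  qed
  define a where "a = (\<lambda>\<sigma>. if \<sigma> < k \<and> 0 < sp \<sigma> then (SOME i. i \<in> best \<sigma> \<and> cond_exp q \<phi> \<xi> \<sigma> i = M \<sigma>) else rec \<sigma>)"
  have a_pos: "a \<sigma> \<in> best \<sigma> \<and> cond_exp q \<phi> \<xi> \<sigma> (a \<sigma>) = M \<sigma>" if "\<sigma> < k" "0 < sp \<sigma>" for \<sigma>
    unfolding a_def using that someI_ex[OF exa[OF that]] by simp
  have a_lt: "a \<sigma> < n" if "\<sigma> < k" for \<sigma>
  proof (cases "0 < sp \<sigma>")
    case True then show ?thesis using a_pos[OF that True] unfolding best_def best_actions_def by auto
  next
    case False then show ?thesis using that assms(3,6) unfolding a_def by auto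
  qed
  have a_best: "cond_exp q \<phi> \<rho> \<sigma> j \<le> cond_exp q \<phi> \<rho> \<sigma> (a \<sigma>)" if "\<sigma> < k" "0 < sp \<sigma>" "j < n" for \<sigma> j
    using a_pos[OF that(1,2)] that(3) unfolding best_def best_actions_def by auto
  obtain \<nu> where nu: "\<nu> permutes {..<n}" "\<forall>x\<in>a ` {..<k}. \<nu> x < k"
    using exists_perm_into[of "a ` {..<k}" n k] a_lt assms(3) card_image_le[of "{..<k}" a] by auto
  define h :: "'t list \<Rightarrow> 't list" where "h = permute_list \<nu>"
  have nu_len: "\<nu> permutes {..<length \<theta>}" if "\<theta> \<in> supp" for \<theta> using nu len[OF that] by simp
  have h_nth: "h \<theta> ! i = \<theta> ! \<nu> i" if "\<theta> \<in> supp" "i < n" for \<theta> i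
    unfolding h_def using permute_list_nth[OF nu_len[OF that(1)]] that len by simp
  have h_pmf: "pmf q (h \<theta>) = pmf q \<theta>" if "\<theta> \<in> supp" for \<theta>
    using symp[of "h \<theta>" \<theta>] mset_permute_list[OF nu_len[OF that]] unfolding h_def by simp
  have h_supp: "h \<theta> \<in> supp" if "\<theta> \<in> supp" for \<theta>
    using h_pmf[OF that] ppos[OF that] unfolding supp_def by (simp add: set_pmf_iff)
  have h_inj: "inj_on h supp"
  proof (rule inj_onI)
    fix x y assume xy: "x \<in> supp" "y \<in> supp" "h x = h y"
    show "x = y"
    proof (rule nth_equalityI)
      show "length x = length y" using len xy by simp
      fix j assume "j < length x"
      then have j: "j < n" using len xy by simp
      define j' where "j' = inv \<nu> j"
      have "j' < n" unfolding j'_def using permutes_in_image[OF permutes_inv[OF nu(1)]] j by simp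
      moreover have "\<nu> j' = j" unfolding j'_def using permutes_inverses(1)[OF nu(1)] by simp
      ultimately show "x ! j = y ! j" using h_nth xy by metis
    qed
  qed
  have h_bij: "bij_betw h supp supp"
    unfolding bij_betw_def using h_inj endo_inj_surj[OF fin _ h_inj] h_supp by auto
  define stk where "stk = (\<lambda>\<theta>::'t list. set (take k \<theta>))"
  define pt where "pt = type_pt \<rho> \<xi>"
  define G where "G = (\<lambda>\<theta>. \<Sum>\<sigma><k. \<phi> \<theta> \<sigma> *\<^sub>R pt (\<theta> ! a \<sigma>))"
  define F where "F = (\<lambda>\<theta>. G (h \<theta>))"
  have F_in: "F \<theta> \<in> conv_types \<rho> \<xi> (stk \<theta>)" if th: "\<theta> \<in> supp" for \<theta>
  proof -
    have "F \<theta> = (\<Sum>\<sigma><k. \<phi> (h \<theta>) \<sigma> *\<^sub>R pt (h \<theta> ! a \<sigma>))" unfolding F_def G_def ..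
    also have "\<dots> \<in> conv_types \<rho> \<xi> (stk \<theta>)"
      unfolding conv_types_def
    proof (rule convex_sum)
      show "(\<Sum>\<sigma><k. \<phi> (h \<theta>) \<sigma>) = 1" using phi1 h_supp th by blast
      show "\<And>\<sigma>. \<sigma> \<in> {..<k} \<Longrightarrow> 0 \<le> \<phi> (h \<theta>) \<sigma>" using phinn h_supp th by blast
      fix \<sigma> assume s: "\<sigma> \<in> {..<k}"
      have "\<nu> (a \<sigma>) < k" using nu s by auto
      moreover have "h \<theta> ! a \<sigma> = \<theta> ! \<nu> (a \<sigma>)" using h_nth th a_lt s by auto
      moreover have "k \<le> length \<theta>" using len th assms(3) by simp
      ultimately have "h \<theta> ! a \<sigma> \<in> stk \<theta>" unfolding stk_def
        using nth_mem[of "\<nu> (a \<sigma>)" "take k \<theta>"] by simp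
      then show "pt (h \<theta> ! a \<sigma>) \<in> convex hull (type_pt \<rho> \<xi> ` stk \<theta>)"
        unfolding pt_def by (intro hull_inc imageI)
    qed (auto simp: convex_convex_hull)
    finally show ?thesis .
  qed
  define Z where "Z = (\<Sum>\<theta>\<in>supp. pmf q \<theta> *\<^sub>R G \<theta>)"
  have ZF: "(\<Sum>\<theta>\<in>supp. pmf q \<theta> *\<^sub>R F \<theta>) = Z"
  proof -
    have "(\<Sum>\<theta>\<in>supp. pmf q \<theta> *\<^sub>R F \<theta>) = (\<Sum>\<theta>\<in>supp. pmf q (h \<theta>) *\<^sub>R G (h \<theta>))"
      unfolding F_def by (intro sum.cong) (auto simp: h_pmf)
    also have "\<dots> = Z" unfolding Z_def by (rule sum.reindex_bij_betw[OF h_bij])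
    finally show ?thesis .
  qed
  have Zcomp: "g (\<Sum>\<theta>\<in>supp. pmf q \<theta> *\<^sub>R G \<theta>) = (\<Sum>\<sigma><k. numer f \<sigma> (a \<sigma>))"
    if g: "\<And>x y. g (x + y) = g x + g y" "\<And>c x. g (c *\<^sub>R x) = c * g x" "g 0 = 0"
       and gpt: "\<And>c. g (pt c) = f c" for g :: "real \<times> real \<Rightarrow> real" and f
  proof -
    have gs: "g (sum v A) = (\<Sum>x\<in>A. g (v x))" if "finite A" for v :: "'b \<Rightarrow> real \<times> real" and A
      using that by (induction A rule: finite_induct) (auto simp: g)
    have "g (\<Sum>\<theta>\<in>supp. pmf q \<theta> *\<^sub>R G \<theta>) = (\<Sum>\<theta>\<in>supp. pmf q \<theta> * (\<Sum>\<sigma><k. \<phi> \<theta> \<sigma> * f (\<theta> ! a \<sigma>)))"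
      unfolding G_def by (simp add: gs[OF fin] gs g gpt)
    also have "\<dots> = (\<Sum>\<sigma><k. numer f \<sigma> (a \<sigma>))"
      unfolding numer_def sum_distrib_left by (subst sum.swap) (simp add: mult.assoc)
    finally show ?thesis .
  qed
  have Zsnd: "snd Z = (\<Sum>\<sigma><k. numer \<xi> \<sigma> (a \<sigma>))"
    unfolding Z_def by (rule Zcomp) (auto simp: pt_def type_pt_def)
  have Zfst: "fst Z = (\<Sum>\<sigma><k. numer \<rho> \<sigma> (a \<sigma>))"
    unfolding Z_def by (rule Zcomp) (auto simp: pt_def type_pt_def)
  have SU: "sender_utility q n k \<phi> \<rho> \<xi> = snd Z"
  proof -
    have "sender_utility q n k \<phi> \<rho> \<xi> = (\<Sum>\<sigma>\<in>{\<sigma>\<in>{..<k}. 0 < sp \<sigma>}. sp \<sigma> * M \<sigma>)"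
      unfolding sender_utility_def sp_def M_def best_def by (intro sum.cong) auto
    also have "\<dots> = (\<Sum>\<sigma><k. if 0 < sp \<sigma> then sp \<sigma> * M \<sigma> else 0)"
      by (rule sum.inter_filter) simp
    also have "\<dots> = (\<Sum>\<sigma><k. numer \<xi> \<sigma> (a \<sigma>))"
    proof (intro sum.cong refl)
      fix \<sigma> assume "\<sigma> \<in> {..<k}"
      then have s: "\<sigma> < k" by simp
      show "(if 0 < sp \<sigma> then sp \<sigma> * M \<sigma> else 0) = numer \<xi> \<sigma> (a \<sigma>)"
      proof (cases "0 < sp \<sigma>")
        case True then show ?thesis using numpos[OF True] a_pos[OF s True] by simp
      next
        case False then have "sp \<sigma> = 0" using spnn[OF s] by simp
        then show ?thesis using num0[OF s] False by simp
      qed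
    qed
    finally show ?thesis using Zsnd by simp
  qed
  have ZR: "rho_E q n \<rho> \<le> fst Z"
  proof -
    have "rho_E q n \<rho> \<in> (\<lambda>i. \<Sum>\<theta>\<in>set_pmf q. pmf q \<theta> * \<rho> (\<theta> ! i)) ` {..<n}"
      unfolding rho_E_def using assms(2,3) by (intro Max_in) (auto simp: lessThan_empty_iff)
    then obtain i where i: "i < n" "rho_E q n \<rho> = (\<Sum>\<theta>\<in>supp. pmf q \<theta> * \<rho> (\<theta> ! i))"
      unfolding supp_def by auto
    have "(\<Sum>\<theta>\<in>supp. pmf q \<theta> * \<rho> (\<theta> ! i)) = (\<Sum>\<sigma><k. numer \<rho> \<sigma> i)"
    proof -
      have "(\<Sum>\<theta>\<in>supp. pmf q \<theta> * \<rho> (\<theta> ! i)) = (\<Sum>\<theta>\<in>supp. pmf q \<theta> * \<rho> (\<theta> ! i) * (\<Sum>\<sigma><k. \<phi> \<theta> \<sigma>))"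
        using phi1 by simp
      also have "\<dots> = (\<Sum>\<sigma><k. numer \<rho> \<sigma> i)"
        unfolding numer_def sum_distrib_left by (subst sum.swap) (simp add: ac_simps)
      finally show ?thesis .
    qed
    also have "\<dots> \<le> (\<Sum>\<sigma><k. numer \<rho> \<sigma> (a \<sigma>))"
    proof (intro sum_mono)
      fix \<sigma> assume "\<sigma> \<in> {..<k}"
      then have s: "\<sigma> < k" by simp
      show "numer \<rho> \<sigma> i \<le> numer \<rho> \<sigma> (a \<sigma>)"
      proof (cases "0 < sp \<sigma>")
        case True then show ?thesis using numpos[OF True] a_best[OF s True i(1)] by simp
      next
        case False then have "sp \<sigma> = 0" using spnn[OF s] by simp
        then show ?thesis using num0[OF s] by simp
      qed
    qed
    finally show ?thesis using i Zfst by simp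
  qed
  define Q where "Q = qC q k"
  have Qdef: "Q C = (\<Sum>\<theta>\<in>{\<theta>\<in>supp. stk \<theta> = C}. pmf q \<theta>)" for C
    unfolding Q_def qC_def stk_def supp_def using fin[unfolded supp_def]
    by (subst sum.inter_filter) auto
  define SC where "SC = supp_sets q k"
  have SCdef: "C \<in> SC \<longleftrightarrow> 0 < Q C" for C unfolding SC_def supp_sets_def Q_def by simp
  have stk_SC: "stk \<theta> \<in> SC" if "\<theta> \<in> supp" for \<theta>
  proof -
    have "pmf q \<theta> \<le> Q (stk \<theta>)" unfolding Qdef
      using that fin by (intro member_le_sum) auto
    then show ?thesis using ppos[OF that] SCdef by simp
  qed
  have SC_sub: "SC \<subseteq> stk ` supp"
  proof
    fix C assume "C \<in> SC"
    then have "0 < Q C" using SCdef by simp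
    then have "{\<theta>\<in>supp. stk \<theta> = C} \<noteq> {}" unfolding Qdef by (metis less_irrefl sum.empty)
    then show "C \<in> stk ` supp" by blast
  qed
  have finSC: "finite SC" using finite_subset[OF SC_sub] fin by blast
  have finC: "finite C" if "C \<in> SC" for C using SC_sub that unfolding stk_def by auto
  define P0 where "P0 = (\<lambda>C. (1 / Q C) *\<^sub>R (\<Sum>\<theta>\<in>{\<theta>\<in>supp. stk \<theta> = C}. pmf q \<theta> *\<^sub>R F \<theta>))"
  have P0in: "P0 C \<in> conv_types \<rho> \<xi> C" if C: "C \<in> SC" for C
  proof -
    have Qp: "0 < Q C" using C SCdef by simp
    have "P0 C = (\<Sum>\<theta>\<in>{\<theta>\<in>supp. stk \<theta> = C}. (pmf q \<theta> / Q C) *\<^sub>R F \<theta>)"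
      unfolding P0_def scaleR_sum_right by (intro sum.cong) auto
    also have "\<dots> \<in> conv_types \<rho> \<xi> C"
    proof (rule convex_sum)
      show "finite {\<theta>\<in>supp. stk \<theta> = C}" using fin by simp
      show "convex (conv_types \<rho> \<xi> C)" unfolding conv_types_def by (rule convex_convex_hull)
      show "(\<Sum>\<theta>\<in>{\<theta>\<in>supp. stk \<theta> = C}. pmf q \<theta> / Q C) = 1"
        using Qp unfolding sum_divide_distrib[symmetric] Qdef[symmetric] by simp
      show "\<And>\<theta>. \<theta> \<in> {\<theta>\<in>supp. stk \<theta> = C} \<Longrightarrow> 0 \<le> pmf q \<theta> / Q C" using Qp by simp
      show "\<And>\<theta>. \<theta> \<in> {\<theta>\<in>supp. stk \<theta> = C} \<Longrightarrow> F \<theta> \<in> conv_types \<rho> \<xi> C" using F_in by blast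
    qed
    finally show ?thesis .
  qed
  have sumP0: "(\<Sum>C\<in>SC. Q C *\<^sub>R P0 C) = Z"
  proof -
    have "(\<Sum>C\<in>SC. Q C *\<^sub>R P0 C) = (\<Sum>C\<in>SC. \<Sum>\<theta>\<in>{\<theta>\<in>supp. stk \<theta> = C}. pmf q \<theta> *\<^sub>R F \<theta>)"
      unfolding P0_def using SCdef by (intro sum.cong) auto
    also have "\<dots> = (\<Sum>\<theta>\<in>supp. pmf q \<theta> *\<^sub>R F \<theta>)"
      using stk_SC by (intro sum.group[OF fin finSC]) auto
    finally show ?thesis using ZF by simp
  qed
  have fst_s: "fst (\<Sum>C\<in>SC. Q C *\<^sub>R P C) = uR_pc q k P" for P
    unfolding uR_pc_def SC_def Q_def by (simp add: fst_sum)
  have snd_s: "snd (\<Sum>C\<in>SC. Q C *\<^sub>R P C) = uS_pc q k P" for P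
    unfolding uS_pc_def SC_def Q_def by (simp add: snd_sum)
  obtain P a1 a2 where P: "\<forall>C\<in>SC. P C \<in> conv_types \<rho> \<xi> C"
    and PR: "rho_E q n \<rho> \<le> fst (\<Sum>C\<in>SC. Q C *\<^sub>R P C)"
    and PS: "snd (\<Sum>C\<in>SC. Q C *\<^sub>R P0 C) \<le> snd (\<Sum>C\<in>SC. Q C *\<^sub>R P C)"
    and a12: "0 \<le> a1" "0 \<le> a2" "a1 \<noteq> 0 \<or> a2 \<noteq> 0"
    and opt: "\<forall>C\<in>SC. \<forall>w\<in>conv_types \<rho> \<xi> C. a1 * fst w + a2 * snd w \<le> a1 * fst (P C) + a2 * snd (P C)"
  proof -
    have "\<exists>P a1 a2. (\<forall>C\<in>SC. P C \<in> conv_types \<rho> \<xi> C) \<and> rho_E q n \<rho> \<le> fst (\<Sum>C\<in>SC. Q C *\<^sub>R P C) \<and>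
     snd (\<Sum>C\<in>SC. Q C *\<^sub>R P0 C) \<le> snd (\<Sum>C\<in>SC. Q C *\<^sub>R P C) \<and>
     0 \<le> a1 \<and> 0 \<le> a2 \<and> (a1 \<noteq> 0 \<or> a2 \<noteq> 0) \<and>
     (\<forall>C\<in>SC. \<forall>w\<in>conv_types \<rho> \<xi> C. a1 * fst w + a2 * snd w \<le> a1 * fst (P C) + a2 * snd (P C))"
    proof (rule opt_exists[OF finSC])
      show "\<forall>C\<in>SC. 0 < Q C" using SCdef by simp
      show "\<forall>C\<in>SC. compact (conv_types \<rho> \<xi> C)" unfolding conv_types_def
        using finC by (auto intro!: finite_imp_compact_convex_hull)
      show "\<forall>C\<in>SC. convex (conv_types \<rho> \<xi> C)" unfolding conv_types_def by simp
      show "\<forall>C\<in>SC. P0 C \<in> conv_types \<rho> \<xi> C" using P0in by blast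
      show "rho_E q n \<rho> \<le> fst (\<Sum>C\<in>SC. Q C *\<^sub>R P0 C)" using sumP0 ZR by simp
    qed
    then show ?thesis using that by blast
  qed
  have uS: "sender_utility q n k \<phi> \<rho> \<xi> \<le> uS_pc q k P" using PS sumP0 SU snd_s by simp
  have uR: "rho_E q n \<rho> \<le> uR_pc q k P" using PR fst_s by simp
  have pc: "point_collection q k \<rho> \<xi> P" using P unfolding point_collection_def SC_def by blast
  show ?thesis
  proof (cases "a2 = 0")
    case True
    then have a1p: "0 < a1" using a12 by simp
    have "corresponds_to_slope \<rho> \<xi> C (-\<infinity>) (P C)" if "C \<in> supp_sets q k" for C
    proof -
      have C: "C \<in> SC" using that SC_def by simp
      have "fst w \<le> fst (P C)" if "w \<in> conv_types \<rho> \<xi> C" for w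
        using opt C that True a1p by auto
      then show ?thesis unfolding corresponds_to_slope_def using P C by auto
    qed
    then have "s_pareto q n k \<rho> \<xi> (-\<infinity>) P" unfolding s_pareto_def using pc uR by blast
    then show ?thesis using uS by (intro exI[of _ "-\<infinity>"]) auto
  next
    case False
    then have a2p: "0 < a2" using a12 by simp
    define s where "s = - a1 / a2"
    have sle: "s \<le> 0" unfolding s_def using a12 a2p by simp
    have "corresponds_to_slope \<rho> \<xi> C (ereal s) (P C)" if "C \<in> supp_sets q k" for C
    proof -
      have C: "C \<in> SC" using that SC_def by simp
      have "snd w - s * fst w \<le> snd (P C) - s * fst (P C)" if "w \<in> conv_types \<rho> \<xi> C" for w
      proof -
        have "a1 * fst w + a2 * snd w \<le> a1 * fst (P C) + a2 * snd (P C)" using opt C that by auto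
        then have "(a1 * fst w + a2 * snd w) / a2 \<le> (a1 * fst (P C) + a2 * snd (P C)) / a2"
          using a2p by (intro divide_right_mono) auto
        then show ?thesis unfolding s_def using a2p by (simp add: field_simps)
      qed
      then show ?thesis unfolding corresponds_to_slope_def using P C by auto
    qed
    then have "s_pareto q n k \<rho> \<xi> (ereal s) P" unfolding s_pareto_def using pc uR by blast
    then show ?thesis using uS sle by (intro exI[of _ "ereal s"]) auto
  qed
qed
end
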